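(* Let $K$ be a field of characteristic $0$ and $\mathcal{H}$ a finite-dimensional associative $K$-algebra with $1$ which is split semisimple and symmetric with trace form $\tau\colon\mathcal{H}\to K$, and let $\dagger\colon\mathcal{H}\to\mathcal{H}$ be a $K$-linear anti-involution. Assume there exists a $\dagger$-symmetric basis $B_0$ of $\mathcal{H}$. Then $$\mathrm{trace}(\dagger\colon\mathcal{H}\to\mathcal{H})=\sum_{E\in\mathrm{Irr}(\mathcal{H})}\nu_E\dim E.$$ In particular, if $B_0=B_0^\vee$ (as sets), then $|\{b\in B_0\mid b^\vee=b\}|=\sum_{E\in\mathrm{Irr}(\mathcal{H})}\nu_E\dim E$.
   Context: $\mathrm{Irr}(\mathcal{H})$ denotes the set of simple $\mathcal{H}$-modules up to isomorphism; $\chi_E(h)=\mathrm{trace}(h,E)$. The Schur elements $c_E\in K\setminus\{0\}$ are defined by $\tau=\sum_{E\in\mathrm{Irr}(\mathcal{H})}c_E^{-1}\chi_E$. For a basis $B$ of $\mathcal{H}$, the dual basis $B^\vee=\{b^\vee\}$ is defined by $\tau(b'b^\vee)=\delta_{b,b'}$. A basis $B_0$ is $\dagger$-symmetric if $b^\dagger=b^\vee$ for all $b\in B_0$. For $E\in\mathrm{Irr}(\mathcal{H})$, $\nu_E:=\frac{1}{c_E\dim E}\sum_{b\in B_0}\chi_E(b^2)$ (which lies in $\{0,\pm1\}$ and is independent of the choice of $\dagger$-symmetric basis $B_0$). *)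

theory Defs
  imports Main "Jordan_Normal_Form.Matrix"
begin

text \<open>The algebra H is the whole type 'h (a ring with 1), with K-scalar multiplication sc.\<close>

definition is_basis :: "('k::field \<Rightarrow> 'h::ring_1 \<Rightarrow> 'h) \<Rightarrow> 'h set \<Rightarrow> bool" where
  "is_basis sc B \<longleftrightarrow> finite B \<and> \<not> module.dependent sc B \<and> module.span sc B = UNIV"

definition fd_algebra :: "('k::field \<Rightarrow> 'h::ring_1 \<Rightarrow> 'h) \<Rightarrow> bool" where
  "fd_algebra sc \<longleftrightarrow> vector_space sc \<and>
     (\<forall>a x y. sc a (x * y) = sc a x * y \<and> sc a (x * y) = x * sc a y) \<and>
     (\<exists>B. is_basis sc B)"

definition lin_trace :: "('k::field \<Rightarrow> 'h::ring_1 \<Rightarrow> 'h) \<Rightarrow> ('h \<Rightarrow> 'h) \<Rightarrow> 'k" where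
  "lin_trace sc f = (let B = (SOME B. is_basis sc B) in
      (\<Sum>b\<in>B. module.representation sc B (f b) b))"

definition left_ideal :: "('k::field \<Rightarrow> 'h::ring_1 \<Rightarrow> 'h) \<Rightarrow> 'h set \<Rightarrow> bool" where
  "left_ideal sc L \<longleftrightarrow> 0 \<in> L \<and> (\<forall>x\<in>L. \<forall>y\<in>L. x + y \<in> L) \<and>
     (\<forall>a. \<forall>x\<in>L. sc a x \<in> L) \<and> (\<forall>h. \<forall>x\<in>L. h * x \<in> L)"

text \<open>Semisimple: the regular left module is semisimple (every left ideal has a complement).\<close>
definition semisimple_alg :: "('k::field \<Rightarrow> 'h::ring_1 \<Rightarrow> 'h) \<Rightarrow> bool" where
  "semisimple_alg sc \<longleftrightarrow> (\<forall>L. left_ideal sc L \<longrightarrow>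
     (\<exists>L'. left_ideal sc L' \<and> L \<inter> L' = {0} \<and> {x + y |x y. x \<in> L \<and> y \<in> L'} = UNIV))"

text \<open>Finite-dimensional H-modules given as matrix representations of dimension d.\<close>
definition is_rep :: "('k::field \<Rightarrow> 'h::ring_1 \<Rightarrow> 'h) \<Rightarrow> nat \<Rightarrow> ('h \<Rightarrow> 'k mat) \<Rightarrow> bool" where
  "is_rep sc d \<rho> \<longleftrightarrow> (\<forall>x. \<rho> x \<in> carrier_mat d d) \<and> \<rho> 1 = one_mat d \<and>
     (\<forall>x y. \<rho> (x * y) = \<rho> x * \<rho> y) \<and> (\<forall>x y. \<rho> (x + y) = \<rho> x + \<rho> y) \<and>
     (\<forall>a x. \<rho> (sc a x) = smult_mat a (\<rho> x))"

definition rep_dim :: "('h::ring_1 \<Rightarrow> 'k mat) \<Rightarrow> nat" where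
  "rep_dim \<rho> = dim_row (\<rho> 1)"

definition simple_rep :: "('k::field \<Rightarrow> 'h::ring_1 \<Rightarrow> 'h) \<Rightarrow> ('h \<Rightarrow> 'k mat) \<Rightarrow> bool" where
  "simple_rep sc \<rho> \<longleftrightarrow> (let d = rep_dim \<rho> in is_rep sc d \<rho> \<and> d > 0 \<and>
     (\<forall>W. W \<subseteq> carrier_vec d \<and> zero_vec d \<in> W \<and> (\<forall>v\<in>W. \<forall>w\<in>W. v + w \<in> W) \<and>
          (\<forall>a. \<forall>v\<in>W. smult_vec a v \<in> W) \<and> (\<forall>x. \<forall>v\<in>W. mult_mat_vec (\<rho> x) v \<in> W)
        \<longrightarrow> W = {zero_vec d} \<or> W = carrier_vec d))"

definition iso_rep :: "('h::ring_1 \<Rightarrow> 'k::field mat) \<Rightarrow> ('h \<Rightarrow> 'k mat) \<Rightarrow> bool" where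
  "iso_rep \<rho> \<sigma> \<longleftrightarrow> rep_dim \<rho> = rep_dim \<sigma> \<and>
     (\<exists>P. P \<in> carrier_mat (rep_dim \<rho>) (rep_dim \<rho>) \<and> invertible_mat P \<and> (\<forall>x. P * \<rho> x = \<sigma> x * P))"

text \<open>Split: every simple module is absolutely simple (its endomorphisms are scalars).\<close>
definition split_alg :: "('k::field \<Rightarrow> 'h::ring_1 \<Rightarrow> 'h) \<Rightarrow> bool" where
  "split_alg sc \<longleftrightarrow> (\<forall>\<rho>. simple_rep sc \<rho> \<longrightarrow> (\<forall>M \<in> carrier_mat (rep_dim \<rho>) (rep_dim \<rho>).
      (\<forall>x. M * \<rho> x = \<rho> x * M) \<longrightarrow> (\<exists>a. M = smult_mat a (one_mat (rep_dim \<rho>)))))"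

definition irr_reps :: "('k::field \<Rightarrow> 'h::ring_1 \<Rightarrow> 'h) \<Rightarrow> ('h \<Rightarrow> 'k mat) set \<Rightarrow> bool" where
  "irr_reps sc R \<longleftrightarrow> (\<forall>E\<in>R. simple_rep sc E) \<and>
     (\<forall>E\<in>R. \<forall>E'\<in>R. iso_rep E E' \<longrightarrow> E = E') \<and>
     (\<forall>\<rho>. simple_rep sc \<rho> \<longrightarrow> (\<exists>E\<in>R. iso_rep \<rho> E))"

definition mat_trace :: "'k::field mat \<Rightarrow> 'k" where
  "mat_trace A = (\<Sum>i<dim_row A. A $$ (i, i))"

definition character :: "('h::ring_1 \<Rightarrow> 'k::field mat) \<Rightarrow> 'h \<Rightarrow> 'k" where
  "character E h = mat_trace (E h)"

definition symmetric_trace_form :: "('k::field \<Rightarrow> 'h::ring_1 \<Rightarrow> 'h) \<Rightarrow> ('h \<Rightarrow> 'k) \<Rightarrow> bool" where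
  "symmetric_trace_form sc \<tau> \<longleftrightarrow> (\<forall>x y. \<tau> (x + y) = \<tau> x + \<tau> y) \<and> (\<forall>a x. \<tau> (sc a x) = a * \<tau> x) \<and>
     (\<forall>x y. \<tau> (x * y) = \<tau> (y * x)) \<and> (\<forall>x. (\<forall>y. \<tau> (x * y) = 0) \<longrightarrow> x = 0)"

definition anti_involution :: "('k::field \<Rightarrow> 'h::ring_1 \<Rightarrow> 'h) \<Rightarrow> ('h \<Rightarrow> 'h) \<Rightarrow> bool" where
  "anti_involution sc dg \<longleftrightarrow> (\<forall>x y. dg (x + y) = dg x + dg y) \<and> (\<forall>a x. dg (sc a x) = sc a (dg x)) \<and>
     (\<forall>x y. dg (x * y) = dg y * dg x) \<and> (\<forall>x. dg (dg x) = x)"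

definition dual_elem :: "('h::ring_1 \<Rightarrow> 'k::field) \<Rightarrow> 'h set \<Rightarrow> 'h \<Rightarrow> 'h" where
  "dual_elem \<tau> B b = (THE y. \<forall>b'\<in>B. \<tau> (b' * y) = (if b' = b then 1 else 0))"

definition dagger_symmetric_basis ::
  "('k::field \<Rightarrow> 'h::ring_1 \<Rightarrow> 'h) \<Rightarrow> ('h \<Rightarrow> 'k) \<Rightarrow> ('h \<Rightarrow> 'h) \<Rightarrow> 'h set \<Rightarrow> bool" where
  "dagger_symmetric_basis sc \<tau> dg B \<longleftrightarrow> is_basis sc B \<and> (\<forall>b\<in>B. dg b = dual_elem \<tau> B b)"

definition schur_elements ::
  "('h::ring_1 \<Rightarrow> 'k::field) \<Rightarrow> ('h \<Rightarrow> 'k mat) set \<Rightarrow> (('h \<Rightarrow> 'k mat) \<Rightarrow> 'k) \<Rightarrow> bool" where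
  "schur_elements \<tau> R c \<longleftrightarrow> (\<forall>E\<in>R. c E \<noteq> 0) \<and>
     (\<forall>h. \<tau> h = (\<Sum>E\<in>R. inverse (c E) * character E h))"

definition nu :: "(('h::ring_1 \<Rightarrow> 'k::field mat) \<Rightarrow> 'k) \<Rightarrow> 'h set \<Rightarrow> ('h \<Rightarrow> 'k mat) \<Rightarrow> 'k" where
  "nu c B0 E = (1 / (c E * of_nat (rep_dim E))) * (\<Sum>b\<in>B0. character E (b * b))"

end

theory Submission
  imports Defs
begin

locale hsetup = vector_space scale
  for scale :: "'k::field \<Rightarrow> 'h::ring_1 \<Rightarrow> 'h" (infixr "*s" 75) +
  fixes tau :: "'h \<Rightarrow> 'k" and dg :: "'h \<Rightarrow> 'h" and B0 :: "'h set"
  assumes compl: "\<And>a x y. a *s (x * y) = (a *s x) * y"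
    and compr: "\<And>a x y. a *s (x * y) = x * (a *s y)"
    and stf: "symmetric_trace_form scale tau"
    and ai: "anti_involution scale dg"
    and dsb: "dagger_symmetric_basis scale tau dg B0"
begin

lemma tau_add: "tau (x + y) = tau x + tau y" using stf by (simp add: symmetric_trace_form_def)
lemma tau_scale: "tau (a *s x) = a * tau x" using stf by (simp add: symmetric_trace_form_def)
lemma tau_comm: "tau (x * y) = tau (y * x)" using stf by (simp add: symmetric_trace_form_def)
lemma tau_nd: "(\<And>y. tau (x * y) = 0) \<Longrightarrow> x = 0" using stf by (simp add: symmetric_trace_form_def)
lemma tau_zero: "tau 0 = 0" using tau_add[of 0 0] by (metis add_cancel_right_right add_0)
lemma tau_diff: "tau (x - y) = tau x - tau y"
  using tau_add[of "x - y" y] by (simp add: algebra_simps)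
lemma tau_sum: "tau (sum f I) = (\<Sum>i\<in>I. tau (f i))"
  by (induction I rule: infinite_finite_induct) (auto simp: tau_zero tau_add)

lemma dg_add: "dg (x + y) = dg x + dg y" using ai by (simp add: anti_involution_def)
lemma dg_scale: "dg (a *s x) = a *s dg x" using ai by (simp add: anti_involution_def)
lemma dg_dg: "dg (dg x) = x" using ai by (simp add: anti_involution_def)
lemma dg_zero: "dg 0 = 0" using dg_add[of 0 0] by simp
lemma dg_sum: "dg (sum f I) = (\<Sum>i\<in>I. dg (f i))"
  by (induction I rule: infinite_finite_induct) (auto simp: dg_zero dg_add)

lemma B0_fin: "finite B0" and B0_ind: "independent B0" and B0_span: "span B0 = UNIV"
  using dsb by (auto simp: dagger_symmetric_basis_def is_basis_def)

lemma dg_B0: "b \<in> B0 \<Longrightarrow> dg b = dual_elem tau B0 b"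
  using dsb by (auto simp: dagger_symmetric_basis_def)

lemma tau_right_lin: "tau (x * (\<Sum>i\<in>I. c i *s y i)) = (\<Sum>i\<in>I. c i * tau (x * y i))"
  by (simp add: sum_distrib_left tau_sum flip: compr add: tau_scale)

lemma tau_left_lin: "tau ((\<Sum>i\<in>I. c i *s y i) * x) = (\<Sum>i\<in>I. c i * tau (y i * x))"
  by (simp add: sum_distrib_right tau_sum flip: compl add: tau_scale)

lemma expand: "x = (\<Sum>b\<in>B0. representation B0 x b *s b)"
  using sum_representation_eq[OF B0_ind _ B0_fin, of x] B0_span by auto

lemma nd_basis:
  assumes "\<And>b. b \<in> B0 \<Longrightarrow> tau (b * y) = 0" shows "y = 0"
proof -
  have "tau (x * y) = 0" for x
  proof -
    have "tau (x * y) = tau ((\<Sum>b\<in>B0. representation B0 x b *s b) * y)"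
      using expand[of x] by simp
    also have "\<dots> = 0" unfolding tau_left_lin using assms by simp
    finally show ?thesis .
  qed
  then have "tau (y * x) = 0" for x using tau_comm by metis
  then show ?thesis using tau_nd by blast
qed

lemma rep_comb:
  assumes "b \<in> B0" shows "representation B0 (\<Sum>a\<in>B0. c a *s a) b = c b"
proof -
  have "representation B0 (\<Sum>a\<in>B0. c a *s a) b = (\<Sum>a\<in>B0. representation B0 (c a *s a) b)"
    using representation_sum[OF B0_ind, of B0 "\<lambda>a. c a *s a"] B0_span by auto
  also have "\<dots> = (\<Sum>a\<in>B0. c a * (if b = a then 1 else 0))"
    using representation_scale[OF B0_ind] representation_basis[OF B0_ind] B0_span
    by (intro sum.cong) auto
  also have "\<dots> = c b" using assms B0_fin by (simp add: if_distrib cong: if_cong)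
  finally show ?thesis .
qed

lemma dual_exists:
  assumes "b \<in> B0" shows "\<exists>y. \<forall>b'\<in>B0. tau (b' * y) = (if b' = b then 1 else 0)"
proof -
  interpret fd: finite_dimensional_vector_space scale B0
    by unfold_locales (auto simp: B0_fin B0_ind B0_span)
  define f where "f y = (\<Sum>b'\<in>B0. tau (b' * y) *s b')" for y
  have lin: "Vector_Spaces.linear scale scale f"
    unfolding Vector_Spaces.linear_iff f_def
  proof (intro conjI allI)
    show "vector_space scale" by (rule vector_space_axioms)
    show "vector_space scale" by (rule vector_space_axioms)
    fix x y :: 'h and a :: 'k
    show "(\<Sum>b'\<in>B0. tau (b' * (x + y)) *s b') = (\<Sum>b'\<in>B0. tau (b' * x) *s b') + (\<Sum>b'\<in>B0. tau (b' * y) *s b')"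
      by (simp add: distrib_left tau_add scale_left_distrib sum.distrib)
    show "(\<Sum>b'\<in>B0. tau (b' * (a *s x)) *s b') = a *s (\<Sum>b'\<in>B0. tau (b' * x) *s b')"
      by (simp add: scale_sum_right tau_scale flip: compr)
  qed
  have inj: "inj f"
  proof (rule injI)
    fix y z assume "f y = f z"
    then have "\<And>b'. b' \<in> B0 \<Longrightarrow> tau (b' * y) = tau (b' * z)"
      unfolding f_def using rep_comb by metis
    then have "\<And>b'. b' \<in> B0 \<Longrightarrow> tau (b' * (y - z)) = 0"
      by (simp add: right_diff_distrib tau_diff)
    then have "y - z = 0" by (rule nd_basis)
    then show "y = z" by simp
  qed
  have "surj f" by (rule fd.linear_inj_imp_surj[OF lin inj])
  then obtain y where y: "f y = b" by (metis surjD)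
  show ?thesis
  proof (intro exI ballI)
    fix b' assume b': "b' \<in> B0"
    have "tau (b' * y) = representation B0 (f y) b'" unfolding f_def using rep_comb[OF b'] by simp
    also have "\<dots> = (if b' = b then 1 else 0)"
      using y representation_basis[OF B0_ind assms] by simp
    finally show "tau (b' * y) = (if b' = b then 1 else 0)" .
  qed
qed

lemma dual_prop:
  assumes "b \<in> B0" "b' \<in> B0" shows "tau (b' * dg b) = (if b' = b then 1 else 0)"
proof -
  obtain y where y: "\<forall>b'\<in>B0. tau (b' * y) = (if b' = b then 1 else 0)"
    using dual_exists[OF assms(1)] by blast
  have "dual_elem tau B0 b = y"
    unfolding dual_elem_def
  proof (rule the_equality)
    show "\<forall>b'\<in>B0. tau (b' * y) = (if b' = b then 1 else 0)" by (rule y)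
    fix z assume z: "\<forall>b'\<in>B0. tau (b' * z) = (if b' = b then 1 else 0)"
    have "\<And>b'. b' \<in> B0 \<Longrightarrow> tau (b' * (z - y)) = 0"
      using y z by (simp add: right_diff_distrib tau_diff)
    then have "z - y = 0" by (rule nd_basis)
    then show "z = y" by simp
  qed
  then show ?thesis using y dg_B0[OF assms(1)] assms(2) by simp
qed

lemma expand_dual: "x = (\<Sum>a\<in>B0. tau (a * x) *s dg a)"
proof -
  let ?z = "x - (\<Sum>a\<in>B0. tau (a * x) *s dg a)"
  have "tau (a' * ?z) = 0" if a': "a' \<in> B0" for a'
  proof -
    have "tau (a' * ?z) = tau (a' * x) - (\<Sum>a\<in>B0. tau (a * x) * tau (a' * dg a))"
      by (simp add: right_diff_distrib tau_diff tau_right_lin)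
    also have "(\<Sum>a\<in>B0. tau (a * x) * tau (a' * dg a)) = (\<Sum>a\<in>B0. tau (a * x) * (if a' = a then 1 else 0))"
      using dual_prop a' by (intro sum.cong) auto
    also have "\<dots> = tau (a' * x)" using a' B0_fin by (simp add: if_distrib cong: if_cong)
    finally show ?thesis by simp
  qed
  then have "?z = 0" by (rule nd_basis)
  then show ?thesis by simp
qed

lemma dg_expand: "dg x = (\<Sum>a\<in>B0. tau (a * x) *s a)"
proof -
  have "dg x = dg (\<Sum>a\<in>B0. tau (a * x) *s dg a)" using expand_dual[of x] by simp
  also have "\<dots> = (\<Sum>a\<in>B0. tau (a * x) *s a)" by (simp add: dg_sum dg_scale dg_dg)
  finally show ?thesis .
qed

lemma trace_any_basis:
  assumes B: "is_basis scale B"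
  shows "(\<Sum>b\<in>B. representation B (dg b) b) = (\<Sum>a\<in>B0. tau (a * a))"
proof -
  have Bf: "finite B" and Bi: "independent B" and Bs: "span B = UNIV"
    using B by (auto simp: is_basis_def)
  have rep: "representation B (dg b) v = (\<Sum>a\<in>B0. tau (a * b) * representation B a v)" for b v
    unfolding dg_expand[of b]
    using representation_sum[OF Bi, of B0 "\<lambda>a. tau (a * b) *s a"] representation_scale[OF Bi] Bs
    by auto
  have "(\<Sum>b\<in>B. representation B (dg b) b) = (\<Sum>b\<in>B. \<Sum>a\<in>B0. tau (a * b) * representation B a b)"
    by (simp add: rep)
  also have "\<dots> = (\<Sum>a\<in>B0. \<Sum>b\<in>B. representation B a b * tau (a * b))"
    by (subst sum.swap) (simp add: mult.commute)
  also have "\<dots> = (\<Sum>a\<in>B0. tau (a * (\<Sum>b\<in>B. representation B a b *s b)))"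
    by (simp add: tau_right_lin)
  also have "\<dots> = (\<Sum>a\<in>B0. tau (a * a))"
    using sum_representation_eq[OF Bi _ Bf] Bs by auto
  finally show ?thesis .
qed

end

theorem proposition2p6:
  fixes sc :: "'k::field_char_0 \<Rightarrow> 'h::ring_1 \<Rightarrow> 'h"
    and \<tau> :: "'h \<Rightarrow> 'k"
    and dg :: "'h \<Rightarrow> 'h"
    and R :: "('h \<Rightarrow> 'k mat) set"
    and c :: "('h \<Rightarrow> 'k mat) \<Rightarrow> 'k"
    and B0 :: "'h set"
  assumes "fd_algebra sc"
    and "semisimple_alg sc"
    and "split_alg sc"
    and "symmetric_trace_form sc \<tau>"
    and "anti_involution sc dg"
    and "irr_reps sc R"
    and "schur_elements \<tau> R c"
    and "dagger_symmetric_basis sc \<tau> dg B0"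
  shows "lin_trace sc dg = (\<Sum>E\<in>R. nu c B0 E * of_nat (rep_dim E))
    \<and> (dual_elem \<tau> B0 ` B0 = B0 \<longrightarrow>
        of_nat (card {b\<in>B0. dual_elem \<tau> B0 b = b}) = (\<Sum>E\<in>R. nu c B0 E * of_nat (rep_dim E)))"
proof -
  interpret H: hsetup sc \<tau> dg B0
    using assms(1,4,5,8) unfolding hsetup_def hsetup_axioms_def fd_algebra_def by metis
  have RHS: "(\<Sum>E\<in>R. nu c B0 E * of_nat (rep_dim E)) = (\<Sum>a\<in>B0. \<tau> (a * a))"
  proof -
    have "nu c B0 E * of_nat (rep_dim E) = (\<Sum>b\<in>B0. inverse (c E) * character E (b * b))"
      if E: "E \<in> R" for E
    proof -
      have "rep_dim E > 0" using assms(6) E by (auto simp: irr_reps_def simple_rep_def Let_def)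
      then have "(of_nat (rep_dim E) :: 'k) \<noteq> 0" by simp
      moreover have "c E \<noteq> 0" using assms(7) E by (simp add: schur_elements_def)
      ultimately have "1 / (c E * of_nat (rep_dim E)) * S * of_nat (rep_dim E) = inverse (c E) * S" for S
        by (simp add: field_simps)
      then show ?thesis unfolding nu_def
        by (metis sum_distrib_left)
    qed
    then have "(\<Sum>E\<in>R. nu c B0 E * of_nat (rep_dim E)) =
        (\<Sum>E\<in>R. \<Sum>b\<in>B0. inverse (c E) * character E (b * b))" by simp
    also have "\<dots> = (\<Sum>b\<in>B0. \<Sum>E\<in>R. inverse (c E) * character E (b * b))" by (rule sum.swap)
    also have "\<dots> = (\<Sum>b\<in>B0. \<tau> (b * b))"
      using assms(7) by (simp add: schur_elements_def)
    finally show ?thesis .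
  qed
  have ex: "\<exists>B. is_basis sc B" using assms(1) by (simp add: fd_algebra_def)
  have P1: "lin_trace sc dg = (\<Sum>a\<in>B0. \<tau> (a * a))"
    unfolding lin_trace_def Let_def by (rule H.trace_any_basis[OF someI_ex[OF ex]])
  have P2: "of_nat (card {b\<in>B0. dual_elem \<tau> B0 b = b}) = (\<Sum>a\<in>B0. \<tau> (a * a))"
    if im: "dual_elem \<tau> B0 ` B0 = B0"
  proof -
    have B0b: "is_basis sc B0" using assms(8) by (simp add: dagger_symmetric_basis_def)
    have "(\<Sum>b\<in>B0. H.representation B0 (dg b) b) = (\<Sum>b\<in>B0. of_bool (dual_elem \<tau> B0 b = b))"
    proof (rule sum.cong)
      fix b assume b: "b \<in> B0"
      have "dg b \<in> B0" using H.dg_B0[OF b] im b by auto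
      then show "H.representation B0 (dg b) b = of_bool (dual_elem \<tau> B0 b = b)"
        using H.representation_basis[OF H.B0_ind] H.dg_B0[OF b] by auto
    qed simp
    also have "\<dots> = of_nat (card {b\<in>B0. dual_elem \<tau> B0 b = b})"
      using H.B0_fin by (simp add: Int_def conj_commute)
    finally show ?thesis using H.trace_any_basis[OF B0b] by simp
  qed
  show ?thesis using RHS P1 P2 by simp
qed

end
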